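(* Let $s,i$ be MIAs over $I$ and $O$ such that $i$ is input-enabled. If $i\ \mathbf{mioco}\ s$, then for every MIA $i'$ with $i'\sqsubseteq i$ it holds that $i'\ \mathbf{mioco}\ s$.
   Context: A Modal Interface Automaton (MIA) over disjoint alphabets $I,O$ is a tuple $(Q,I,O,\longrightarrow_\Box,\longrightarrow_\Diamond)$ with $Q$ a finite set of states and must/may transition relations $\longrightarrow_\Box,\longrightarrow_\Diamond\subseteq Q\times(I\cup O)\times Q$ such that every must transition is a may transition, and for inputs $i\in I$: must $i$-transitions are deterministic, and every may $i$-transition is a must transition. A MIA is input-enabled iff every state has an outgoing must transition for every input. MIA-refinement: $\mathcal R\subseteq P\times Q$ is a MIA-refinement iff for all $(p,q)\in\mathcal R$: (1) $q\overset{a}{\longrightarrow}_\Box q'$, $a\in I\cup O$, implies $\exists p'$: $p\overset{a}{\longrightarrow}_\Box p'$, $(p',q')\in\mathcal R$; (2) $p\overset{\alpha}{\longrightarrow}_\Diamond p'$, $\alpha\in O$, implies $\exists q'$: $q\overset{\alpha}{\longrightarrow}_\Diamond q'$, $(p',q')\in\mathcal R$; $p\sqsubseteq q$ iff some MIA-refinement contains $(p,q)$. For $\gamma\in\{\Box,\Diamond\}$: $init_\gamma(p)=\{\mu\in I\cup O\mid p\overset{\mu}{\longrightarrow}_\gamma\}$; $\delta_\Diamond(p)$ (may-quiescent) iff $init_\Box(p)\subseteq I$; $\delta_\Box(p)$ (must-quiescent) iff $init_\Diamond(p)\subseteq I$; the symbol $\delta_\gamma$ acts as a $\gamma$-self-loop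 at states $q$ with $\delta_\gamma(q)$; $p\ \mathrm{after}_\gamma\ \sigma$ is the set of states reachable from $p$ by a $\gamma$-path (including $\delta_\gamma$-loops) labeled $\sigma$ (for a set of states, the union); $Out_\gamma(P)=\{\mu\in O\mid\exists p\in P:p\overset{\mu}{\longrightarrow}_\gamma\}\cup\{\delta_\gamma\mid\exists p\in P:\delta_\gamma(p)\}$; $Straces_\gamma(p)$ is the set of words $\sigma$ over $I\cup O\cup\{\delta_\gamma\}$ with $p\overset{\sigma}{\longrightarrow}_\gamma$. For MIAs $s,i$ with $i$ input-enabled, $i\ \mathbf{mioco}\ s$ iff (1) for all $\sigma\in Straces_\Diamond(s)$: $Out_\Diamond(i\ \mathrm{after}_\Diamond\ \sigma)\subseteq Out_\Diamond(s\ \mathrm{after}_\Diamond\ \sigma)$, and (2) for all $\sigma\in Straces_\Box(i)$: $Out_\Box(s\ \mathrm{after}_\Box\ \sigma)\subseteq Out_\Box(i\ \mathrm{after}_\Box\ \sigma)$. *)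

theory Defs
  imports Main
begin

record ('s, 'a) mia =
  states :: "'s set"
  must :: "('s \<times> 'a \<times> 's) set"
  may :: "('s \<times> 'a \<times> 's) set"
  start :: 's

datatype modality = Must | May

datatype 'a lab = Act 'a | Delta

definition is_mia :: "'a set \<Rightarrow> 'a set \<Rightarrow> ('s, 'a) mia \<Rightarrow> bool" where
  "is_mia In Ou M \<longleftrightarrow>
     finite (states M) \<and> start M \<in> states M \<and>
     may M \<subseteq> states M \<times> (In \<union> Ou) \<times> states M \<and>
     must M \<subseteq> may M \<and>
     (\<forall>p i p' p''. i \<in> In \<longrightarrow> (p, i, p') \<in> must M \<longrightarrow> (p, i, p'') \<in> must M \<longrightarrow> p' = p'') \<and>
     (\<forall>p i p'. i \<in> In \<longrightarrow> (p, i, p') \<in> may M \<longrightarrow> (p, i, p') \<in> must M)"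

definition input_enabled :: "'a set \<Rightarrow> ('s, 'a) mia \<Rightarrow> bool" where
  "input_enabled In M \<longleftrightarrow> (\<forall>p \<in> states M. \<forall>i \<in> In. \<exists>p'. (p, i, p') \<in> must M)"

definition mia_refinement ::
  "'a set \<Rightarrow> 'a set \<Rightarrow> ('p, 'a) mia \<Rightarrow> ('q, 'a) mia \<Rightarrow> ('p \<times> 'q) set \<Rightarrow> bool" where
  "mia_refinement In Ou P Q R \<longleftrightarrow>
     R \<subseteq> states P \<times> states Q \<and>
     (\<forall>(p, q) \<in> R.
        (\<forall>a q'. a \<in> In \<union> Ou \<longrightarrow> (q, a, q') \<in> must Q \<longrightarrow> (\<exists>p'. (p, a, p') \<in> must P \<and> (p', q') \<in> R)) \<and>
        (\<forall>a p'. a \<in> Ou \<longrightarrow> (p, a, p') \<in> may P \<longrightarrow> (\<exists>q'. (q, a, q') \<in> may Q \<and> (p', q') \<in> R)))"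

definition refines ::
  "'a set \<Rightarrow> 'a set \<Rightarrow> ('p, 'a) mia \<Rightarrow> ('q, 'a) mia \<Rightarrow> bool" where
  "refines In Ou P Q \<longleftrightarrow> (\<exists>R. mia_refinement In Ou P Q R \<and> (start P, start Q) \<in> R)"

fun trans :: "('s, 'a) mia \<Rightarrow> modality \<Rightarrow> ('s \<times> 'a \<times> 's) set" where
  "trans M Must = must M"
| "trans M May = may M"

definition init_set :: "'a set \<Rightarrow> 'a set \<Rightarrow> ('s, 'a) mia \<Rightarrow> modality \<Rightarrow> 's \<Rightarrow> 'a set" where
  "init_set In Ou M g p = {a \<in> In \<union> Ou. \<exists>p'. (p, a, p') \<in> trans M g}"

fun quiescent :: "'a set \<Rightarrow> 'a set \<Rightarrow> ('s, 'a) mia \<Rightarrow> modality \<Rightarrow> 's \<Rightarrow> bool" where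
  "quiescent In Ou M May p = (init_set In Ou M Must p \<subseteq> In)"
| "quiescent In Ou M Must p = (init_set In Ou M May p \<subseteq> In)"

fun step_set :: "'a set \<Rightarrow> 'a set \<Rightarrow> ('s, 'a) mia \<Rightarrow> modality \<Rightarrow> 's set \<Rightarrow> 'a lab \<Rightarrow> 's set" where
  "step_set In Ou M g P (Act a) = {p'. \<exists>p \<in> P. (p, a, p') \<in> trans M g}"
| "step_set In Ou M g P Delta = {p \<in> P. quiescent In Ou M g p}"

fun after :: "'a set \<Rightarrow> 'a set \<Rightarrow> ('s, 'a) mia \<Rightarrow> modality \<Rightarrow> 's set \<Rightarrow> 'a lab list \<Rightarrow> 's set" where
  "after In Ou M g P [] = P"
| "after In Ou M g P (x # \<sigma>) = after In Ou M g (step_set In Ou M g P x) \<sigma>"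

definition straces :: "'a set \<Rightarrow> 'a set \<Rightarrow> ('s, 'a) mia \<Rightarrow> modality \<Rightarrow> 's \<Rightarrow> 'a lab list set" where
  "straces In Ou M g p = {\<sigma>. set \<sigma> \<subseteq> Act ` (In \<union> Ou) \<union> {Delta} \<and> after In Ou M g {p} \<sigma> \<noteq> {}}"

definition outs :: "'a set \<Rightarrow> 'a set \<Rightarrow> ('s, 'a) mia \<Rightarrow> modality \<Rightarrow> 's set \<Rightarrow> 'a lab set" where
  "outs In Ou M g P =
     {Act a | a. a \<in> Ou \<and> (\<exists>p \<in> P. \<exists>p'. (p, a, p') \<in> trans M g)} \<union>
     {d. d = Delta \<and> (\<exists>p \<in> P. quiescent In Ou M g p)}"

text \<open>The two mioco conditions (input-enabledness of the implementation is a standing premise,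
  stated separately).\<close>
definition mioco :: "'a set \<Rightarrow> 'a set \<Rightarrow> ('p, 'a) mia \<Rightarrow> ('q, 'a) mia \<Rightarrow> bool" where
  "mioco In Ou i s \<longleftrightarrow>
     (\<forall>\<sigma> \<in> straces In Ou s May (start s).
        outs In Ou i May (after In Ou i May {start i} \<sigma>) \<subseteq> outs In Ou s May (after In Ou s May {start s} \<sigma>)) \<and>
     (\<forall>\<sigma> \<in> straces In Ou i Must (start i).
        outs In Ou s Must (after In Ou s Must {start s} \<sigma>) \<subseteq> outs In Ou i Must (after In Ou i Must {start i} \<sigma>))"

end

theory Submission
  imports Defs
begin

lemma after_append: "after In Ou M g P (xs @ ys) = after In Ou M g (after In Ou M g P xs) ys"
  by (induction xs arbitrary: P) auto

lemma after_empty: "after In Ou M g {} xs = {}"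
proof (induction xs)
  case (Cons x xs) then show ?case by (cases x) auto
qed simp

lemma after_states:
  assumes "is_mia In Ou M" "P \<subseteq> states M"
  shows "after In Ou M g P xs \<subseteq> states M"
  using assms(2)
proof (induction xs arbitrary: P)
  case (Cons x xs)
  have "step_set In Ou M g P x \<subseteq> states M"
    using Cons.prems assms(1) by (cases x; cases g) (auto simp: is_mia_def)
  then show ?case using Cons.IH by simp
qed simp

lemma step_may_sim:
  assumes dis: "In \<inter> Ou = {}" and mP: "is_mia In Ou P" and mQ: "is_mia In Ou Q"
    and ie: "input_enabled In Q" and R: "mia_refinement In Ou P Q R"
    and rel: "\<forall>p\<in>A. \<exists>q\<in>B. (p,q)\<in>R"
  shows "\<forall>p\<in>step_set In Ou P May A x. \<exists>q\<in>step_set In Ou Q May B x. (p,q)\<in>R"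
proof (cases x)
  case (Act a)
  show ?thesis
  proof
    fix p' assume "p' \<in> step_set In Ou P May A x"
    then obtain p where p: "p \<in> A" "(p,a,p') \<in> may P" using Act by auto
    obtain q where q: "q \<in> B" "(p,q) \<in> R" using rel p by blast
    have a: "a \<in> In \<union> Ou" using p mP by (auto simp: is_mia_def)
    show "\<exists>q\<in>step_set In Ou Q May B x. (p',q)\<in>R"
    proof (cases "a \<in> Ou")
      case True
      then obtain q' where "(q,a,q') \<in> may Q" "(p',q') \<in> R"
        using R q p unfolding mia_refinement_def by fastforce
      then show ?thesis using q Act by auto
    next
      case False
      then have aI: "a \<in> In" using a by auto
      have pm: "(p,a,p') \<in> must P" using p aI mP by (auto simp: is_mia_def)
      have "q \<in> states Q" using R q unfolding mia_refinement_def by auto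
      then obtain q' where q': "(q,a,q') \<in> must Q" using ie aI by (auto simp: input_enabled_def)
      then obtain p'' where "(p,a,p'') \<in> must P" "(p'',q') \<in> R"
        using R q a unfolding mia_refinement_def by fastforce
      moreover have "p'' = p'" using calculation(1) pm aI mP unfolding is_mia_def by blast
      moreover have "(q,a,q') \<in> may Q" using q' mQ by (auto simp: is_mia_def)
      ultimately show ?thesis using q Act by auto
    qed
  qed
next
  case Delta
  show ?thesis
  proof
    fix p assume "p \<in> step_set In Ou P May A x"
    then have p: "p \<in> A" "init_set In Ou P Must p \<subseteq> In" using Delta by auto
    obtain q where q: "q \<in> B" "(p,q) \<in> R" using rel p by blast
    have "init_set In Ou Q Must q \<subseteq> In"
    proof
      fix a assume "a \<in> init_set In Ou Q Must q"
      then obtain q' where a: "a \<in> In \<union> Ou" "(q,a,q') \<in> must Q" by (auto simp: init_set_def)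
      then obtain p' where "(p,a,p') \<in> must P"
        using R q unfolding mia_refinement_def by fastforce
      then have "a \<in> init_set In Ou P Must p" using a by (auto simp: init_set_def)
      then show "a \<in> In" using p by auto
    qed
    then show "\<exists>q\<in>step_set In Ou Q May B x. (p,q)\<in>R" using q Delta by auto
  qed
qed

lemma after_may_sim:
  assumes dis: "In \<inter> Ou = {}" and mP: "is_mia In Ou P" and mQ: "is_mia In Ou Q"
    and ie: "input_enabled In Q" and R: "mia_refinement In Ou P Q R"
  shows "\<forall>p\<in>A. \<exists>q\<in>B. (p,q)\<in>R \<Longrightarrow>
    \<forall>p\<in>after In Ou P May A xs. \<exists>q\<in>after In Ou Q May B xs. (p,q)\<in>R"
proof (induction xs arbitrary: A B)
  case (Cons x xs)
  show ?case using Cons.IH[OF step_may_sim[OF assms Cons.prems]] by simp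
qed simp

lemma step_must_sim:
  assumes dis: "In \<inter> Ou = {}" and mQ: "is_mia In Ou Q"
    and R: "mia_refinement In Ou P Q R"
    and rel: "\<forall>q\<in>B. \<exists>p\<in>A. (p,q)\<in>R"
  shows "\<forall>q\<in>step_set In Ou Q Must B x. \<exists>p\<in>step_set In Ou P Must A x. (p,q)\<in>R"
proof (cases x)
  case (Act a)
  show ?thesis
  proof
    fix q' assume "q' \<in> step_set In Ou Q Must B x"
    then obtain q where q: "q \<in> B" "(q,a,q') \<in> must Q" using Act by auto
    obtain p where p: "p \<in> A" "(p,q) \<in> R" using rel q by blast
    have a: "a \<in> In \<union> Ou" using q mQ by (auto simp: is_mia_def)
    obtain p' where "(p,a,p') \<in> must P" "(p',q') \<in> R"
      using R q p a unfolding mia_refinement_def by fastforce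
    then show "\<exists>p\<in>step_set In Ou P Must A x. (p,q')\<in>R" using p Act by auto
  qed
next
  case Delta
  show ?thesis
  proof
    fix q assume "q \<in> step_set In Ou Q Must B x"
    then have q: "q \<in> B" "init_set In Ou Q May q \<subseteq> In" using Delta by auto
    obtain p where p: "p \<in> A" "(p,q) \<in> R" using rel q by blast
    have "init_set In Ou P May p \<subseteq> In"
    proof
      fix a assume "a \<in> init_set In Ou P May p"
      then obtain p' where a: "a \<in> In \<union> Ou" "(p,a,p') \<in> may P" by (auto simp: init_set_def)
      show "a \<in> In"
      proof (rule ccontr)
        assume "a \<notin> In"
        then have "a \<in> Ou" using a by auto
        then obtain q' where "(q,a,q') \<in> may Q"
          using R p a unfolding mia_refinement_def by fastforce
        then have "a \<in> init_set In Ou Q May q" using a by (auto simp: init_set_def)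
        then show False using q \<open>a \<notin> In\<close> by auto
      qed
    qed
    then show "\<exists>p\<in>step_set In Ou P Must A x. (p,q)\<in>R" using p Delta by auto
  qed
qed

lemma after_must_sim:
  assumes dis: "In \<inter> Ou = {}" and mQ: "is_mia In Ou Q"
    and R: "mia_refinement In Ou P Q R"
  shows "\<forall>q\<in>B. \<exists>p\<in>A. (p,q)\<in>R \<Longrightarrow>
    \<forall>q\<in>after In Ou Q Must B xs. \<exists>p\<in>after In Ou P Must A xs. (p,q)\<in>R"
proof (induction xs arbitrary: A B)
  case (Cons x xs)
  show ?case using Cons.IH[OF step_must_sim[OF assms Cons.prems]] by simp
qed simp

lemma outs_may_sub:
  assumes dis: "In \<inter> Ou = {}" and R: "mia_refinement In Ou P Q R"
    and rel: "\<forall>p\<in>A. \<exists>q\<in>B. (p,q)\<in>R"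
  shows "outs In Ou P May A \<subseteq> outs In Ou Q May B"
proof
  fix d assume "d \<in> outs In Ou P May A"
  then consider (act) a p p' where "d = Act a" "a \<in> Ou" "p \<in> A" "(p,a,p') \<in> may P"
    | (del) p where "d = Delta" "p \<in> A" "quiescent In Ou P May p"
    unfolding outs_def by auto
  then show "d \<in> outs In Ou Q May B"
  proof cases
    case act
    obtain q where q: "q \<in> B" "(p,q) \<in> R" using rel act by blast
    then obtain q' where "(q,a,q') \<in> may Q"
      using R act unfolding mia_refinement_def by fastforce
    then show ?thesis using act q unfolding outs_def by auto
  next
    case del
    obtain q where q: "q \<in> B" "(p,q) \<in> R" using rel del by blast
    have "init_set In Ou Q Must q \<subseteq> In"
    proof
      fix a assume "a \<in> init_set In Ou Q Must q"
      then obtain q' where a: "a \<in> In \<union> Ou" "(q,a,q') \<in> must Q" by (auto simp: init_set_def)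
      then obtain p' where "(p,a,p') \<in> must P"
        using R q unfolding mia_refinement_def by fastforce
      then have "a \<in> init_set In Ou P Must p" using a by (auto simp: init_set_def)
      then show "a \<in> In" using del by auto
    qed
    then show ?thesis using del q unfolding outs_def by auto
  qed
qed

lemma outs_must_sub:
  assumes dis: "In \<inter> Ou = {}" and R: "mia_refinement In Ou P Q R"
    and rel: "\<forall>q\<in>B. \<exists>p\<in>A. (p,q)\<in>R"
  shows "outs In Ou Q Must B \<subseteq> outs In Ou P Must A"
proof
  fix d assume "d \<in> outs In Ou Q Must B"
  then consider (act) a q q' where "d = Act a" "a \<in> Ou" "q \<in> B" "(q,a,q') \<in> must Q"
    | (del) q where "d = Delta" "q \<in> B" "quiescent In Ou Q Must q"
    unfolding outs_def by auto
  then show "d \<in> outs In Ou P Must A"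
  proof cases
    case act
    obtain p where p: "p \<in> A" "(p,q) \<in> R" using rel act by blast
    then obtain p' where "(p,a,p') \<in> must P"
      using R act unfolding mia_refinement_def by fastforce
    then show ?thesis using act p unfolding outs_def by auto
  next
    case del
    obtain p where p: "p \<in> A" "(p,q) \<in> R" using rel del by blast
    have "init_set In Ou P May p \<subseteq> In"
    proof
      fix a assume "a \<in> init_set In Ou P May p"
      then obtain p' where a: "a \<in> In \<union> Ou" "(p,a,p') \<in> may P" by (auto simp: init_set_def)
      show "a \<in> In"
      proof (rule ccontr)
        assume "a \<notin> In"
        then have "a \<in> Ou" using a by auto
        then obtain q' where "(q,a,q') \<in> may Q"
          using R p a unfolding mia_refinement_def by fastforce
        then have "a \<in> init_set In Ou Q May q" using a by (auto simp: init_set_def)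
        then show False using del \<open>a \<notin> In\<close> by auto
      qed
    qed
    then show ?thesis using del p unfolding outs_def by auto
  qed
qed

lemma must_traces_incl:
  assumes ms: "is_mia In Ou s" and mi: "is_mia In Ou i" and ie: "input_enabled In i"
    and mc: "mioco In Ou i s"
  shows "set xs \<subseteq> Act ` (In \<union> Ou) \<union> {Delta} \<Longrightarrow> after In Ou s Must {start s} xs \<noteq> {} \<Longrightarrow>
    after In Ou i Must {start i} xs \<noteq> {}"
proof (induction xs rule: rev_induct)
  case Nil then show ?case by simp
next
  case (snoc x xs)
  let ?S = "after In Ou s Must {start s} xs" and ?I = "after In Ou i Must {start i} xs"
  have nS: "step_set In Ou s Must ?S x \<noteq> {}" using snoc.prems by (simp add: after_append)
  have "?S \<noteq> {}" using nS by (cases x) auto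
  then have nI: "?I \<noteq> {}" using snoc by auto
  then have tr: "xs \<in> straces In Ou i Must (start i)" using snoc.prems by (auto simp: straces_def)
  have sub: "outs In Ou s Must ?S \<subseteq> outs In Ou i Must ?I" using mc tr by (auto simp: mioco_def)
  have "step_set In Ou i Must ?I x \<noteq> {}"
  proof (cases x)
    case (Act a)
    then obtain r r' where r: "r \<in> ?S" "(r,a,r') \<in> must s" using nS by auto
    have a: "a \<in> In \<union> Ou" using snoc.prems Act by auto
    show ?thesis
    proof (cases "a \<in> Ou")
      case True
      then have "Act a \<in> outs In Ou s Must ?S" using r unfolding outs_def by auto
      then have "Act a \<in> outs In Ou i Must ?I" using sub by auto
      then show ?thesis using Act unfolding outs_def by auto
    next
      case False
      then have aI: "a \<in> In" using a by auto
      obtain q where q: "q \<in> ?I" using nI by auto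
      have "q \<in> states i" using q after_states[OF mi, of "{start i}"] mi
        by (auto simp: is_mia_def)
      then obtain q' where "(q,a,q') \<in> must i" using ie aI by (auto simp: input_enabled_def)
      then show ?thesis using q Act by auto
    qed
  next
    case Delta
    then obtain r where "r \<in> ?S" "quiescent In Ou s Must r" using nS by auto
    then have "Delta \<in> outs In Ou s Must ?S" unfolding outs_def by auto
    then have "Delta \<in> outs In Ou i Must ?I" using sub by auto
    then show ?thesis using Delta unfolding outs_def by auto
  qed
  then show ?case by (simp add: after_append)
qed

theorem proposition2:
  fixes In Ou :: "'a set"
    and s :: "('r, 'a) mia" and i :: "('q, 'a) mia" and i' :: "('p, 'a) mia"
  assumes "In \<inter> Ou = {}"
    and "is_mia In Ou s" and "is_mia In Ou i" and "input_enabled In i"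
    and "mioco In Ou i s"
    and "is_mia In Ou i'" and "refines In Ou i' i"
  shows "mioco In Ou i' s"
proof -
  obtain R where R: "mia_refinement In Ou i' i R" "(start i', start i) \<in> R"
    using assms(7) by (auto simp: refines_def)
  have c1: "outs In Ou i' May (after In Ou i' May {start i'} \<sigma>)
      \<subseteq> outs In Ou s May (after In Ou s May {start s} \<sigma>)"
    if "\<sigma> \<in> straces In Ou s May (start s)" for \<sigma>
  proof -
    have "\<forall>p\<in>after In Ou i' May {start i'} \<sigma>. \<exists>q\<in>after In Ou i May {start i} \<sigma>. (p,q)\<in>R"
      using after_may_sim[OF assms(1) assms(6) assms(3) assms(4) R(1)] R(2) by blast
    then have "outs In Ou i' May (after In Ou i' May {start i'} \<sigma>)
        \<subseteq> outs In Ou i May (after In Ou i May {start i} \<sigma>)"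
      using outs_may_sub[OF assms(1) R(1)] by blast
    also have "\<dots> \<subseteq> outs In Ou s May (after In Ou s May {start s} \<sigma>)"
      using assms(5) that by (auto simp: mioco_def)
    finally show ?thesis .
  qed
  have c2: "outs In Ou s Must (after In Ou s Must {start s} \<sigma>)
      \<subseteq> outs In Ou i' Must (after In Ou i' Must {start i'} \<sigma>)"
    if "\<sigma> \<in> straces In Ou i' Must (start i')" for \<sigma>
  proof (cases "after In Ou s Must {start s} \<sigma> = {}")
    case True then show ?thesis by (simp add: outs_def)
  next
    case False
    have st: "set \<sigma> \<subseteq> Act ` (In \<union> Ou) \<union> {Delta}" using that by (auto simp: straces_def)
    have "after In Ou i Must {start i} \<sigma> \<noteq> {}"
      using must_traces_incl[OF assms(2,3,4,5) st False] .
    then have "\<sigma> \<in> straces In Ou i Must (start i)" using st by (auto simp: straces_def)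
    then have "outs In Ou s Must (after In Ou s Must {start s} \<sigma>)
        \<subseteq> outs In Ou i Must (after In Ou i Must {start i} \<sigma>)"
      using assms(5) by (auto simp: mioco_def)
    also have "\<dots> \<subseteq> outs In Ou i' Must (after In Ou i' Must {start i'} \<sigma>)"
    proof -
      have "\<forall>q\<in>after In Ou i Must {start i} \<sigma>. \<exists>p\<in>after In Ou i' Must {start i'} \<sigma>. (p,q)\<in>R"
        using after_must_sim[OF assms(1) assms(3) R(1)] R(2) by blast
      then show ?thesis using outs_must_sub[OF assms(1) R(1)] by blast
    qed
    finally show ?thesis .
  qed
  show ?thesis using c1 c2 by (auto simp: mioco_def)
qed

end
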